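(* Let $\mathcal{X}_{k-1}\subset\mathbb{R}^n$ and $\mathcal{W}_{k-1}\subset\mathbb{R}^q$ be constrained zonotopes and $u_{k-1}\in\mathbb{R}^p$ a fixed vector. Let $f:\mathbb{R}^n\times\mathbb{R}^p\times\mathbb{R}^q\to\mathbb{R}^n$ and write it as $\varrho^{\rm f}:\mathbb{R}^{n+p+q}\to\mathbb{R}^n$, $\varrho^{\rm f}(z)=f(x,u,w)$ for $z=[x^\top\ u^\top\ w^\top]^\top$. Let $\mathcal{Z}_{k-1}=\mathcal{X}_{k-1}\times\{u_{k-1}\}\times\mathcal{W}_{k-1}$, let $\mathcal{P}_{k-1}\supseteq\mathcal{Z}_{k-1}$ be a convex polytope, and suppose $\varrho^{\rm f}=\varrho^{\rm fa}-\varrho^{\rm fb}$ on $\mathcal{P}_{k-1}$ where $\varrho^{\rm fa},\varrho^{\rm fb}:\mathbb{R}^{n+p+q}\to\mathbb{R}^n$ are differentiable and componentwise convex on $\mathcal{P}_{k-1}$. Let $\bar z=[\bar x^\top\ u_{k-1}^\top\ \bar w^\top]^\top\in\mathcal{P}_{k-1}$, let $F=\nabla_z\varrho^{\rm f}(\bar z)$, $F^{\rm x}=\nabla_x\varrho^{\rm f}(\bar z)$, $F^{\rm w}=\nabla_w\varrho^{\rm f}(\bar z)$, and define the linearizations $\bar\varrho(z)=\varrho^{\rm f}(\bar z)+F(z-\bar z)$, $\bar\varrho^{\rm a}(z)=\varrho^{\rm fa}(\bar z)+\nabla_z\varrho^{\rm fa}(\bar z)(z-\bar z)$, $\bar\varrho^{\rm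 b}(z)=\varrho^{\rm fb}(\bar z)+\nabla_z\varrho^{\rm fb}(\bar z)(z-\bar z)$. For $i=1,\ldots,n$ let $$e^-_i=\min_{z\in\mathrm{vert}(\mathcal{P}_{k-1})}\big(\bar\varrho^{\rm a}_i(z)-\varrho^{\rm fb}_i(z)-\bar\varrho_i(z)\big),\qquad e^+_i=\max_{z\in\mathrm{vert}(\mathcal{P}_{k-1})}\big(\varrho^{\rm fa}_i(z)-\bar\varrho^{\rm b}_i(z)-\bar\varrho_i(z)\big),$$ and let $\mathcal{R}_{k-1}$ be the zonotope $\{\mathrm{diag}(\tfrac12(e^+-e^-)),\tfrac12(e^-+e^+)\}$, i.e. the box $[e^-,e^+]$. Then $$\{f(x,u_{k-1},w):x\in\mathcal{X}_{k-1},\ w\in\mathcal{W}_{k-1}\}\subseteq\mathcal{X}_{k|k-1}:=\big(\varrho^{\rm f}(\bar z)-F^{\rm x}\bar x-F^{\rm w}\bar w\big)\oplus F^{\rm x}\mathcal{X}_{k-1}\oplus F^{\rm w}\mathcal{W}_{k-1}\oplus\mathcal{R}_{k-1},$$ and $\mathcal{X}_{k|k-1}$ is a constrained zonotope.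
   Context: A constrained zonotope (CZ) is a set $\{G,c,A,b\}=\{G\xi+c:\xi\in[-1,1]^{n_g},\ A\xi=b\}$ with $G\in\mathbb{R}^{n\times n_g}$, $c\in\mathbb{R}^n$, $A\in\mathbb{R}^{n_h\times n_g}$, $b\in\mathbb{R}^{n_h}$; a zonotope $\{G,c\}$ has no equality constraints. $\oplus$ denotes Minkowski sum (a vector is treated as a singleton), $L\mathcal{X}=\{Lx:x\in\mathcal{X}\}$, $\times$ is the Cartesian product, and $\mathrm{vert}(\mathcal{P})$ is the (finite) vertex set of a polytope $\mathcal{P}$. For a vector-valued function, "convex" means each component is convex; $\nabla_x$ denotes the Jacobian with respect to the block $x$ of the argument. *)

theory Defs
  imports "HOL-Analysis.Analysis"
begin

text \<open>Constrained zonotope {G,c,A,b} with n_g generators (columns G j, j < n_g)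
  and n_h equality constraints (rows i < n_h of A, entries A i j).\<close>
definition cz_set ::
  "nat \<Rightarrow> nat \<Rightarrow> (nat \<Rightarrow> 'a::real_vector) \<Rightarrow> 'a \<Rightarrow> (nat \<Rightarrow> nat \<Rightarrow> real) \<Rightarrow> (nat \<Rightarrow> real) \<Rightarrow> 'a set"
  where "cz_set ng nh G c A b =
    {(\<Sum>j<ng. \<xi> j *\<^sub>R G j) + c | \<xi>.
        (\<forall>j<ng. \<bar>\<xi> j\<bar> \<le> 1) \<and> (\<forall>i<nh. (\<Sum>j<ng. A i j * \<xi> j) = b i)}"

definition is_cz :: "'a::real_vector set \<Rightarrow> bool"
  where "is_cz S \<longleftrightarrow> (\<exists>ng nh G c A b. S = cz_set ng nh G c A b)"

definition zonotope_set :: "('g::finite \<Rightarrow> 'a::real_vector) \<Rightarrow> 'a \<Rightarrow> 'a set"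
  where "zonotope_set G c = {(\<Sum>j\<in>UNIV. \<xi> j *\<^sub>R G j) + c | \<xi>. \<forall>j. \<bar>\<xi> j\<bar> \<le> 1}"

definition msum :: "'a::plus set \<Rightarrow> 'a set \<Rightarrow> 'a set" (infixl \<open>\<oplus>\<^sub>M\<close> 65)
  where "A \<oplus>\<^sub>M B = {a + b | a b. a \<in> A \<and> b \<in> B}"

definition vertices :: "'a::real_vector set \<Rightarrow> 'a set"
  where "vertices P = {v. v extreme_point_of P}"

end

theory Submission
  imports Defs
begin

lemma mid_bound: "(a::real) \<le> x \<Longrightarrow> x \<le> b \<Longrightarrow> \<bar>x - (a + b) / 2\<bar> \<le> (b - a) / 2"
  unfolding abs_le_iff by (intro conjI; simp add: field_simps)
lemma mid_bound2: "(a::real) \<le> x \<and> x \<le> b \<Longrightarrow> b - a \<noteq> 0 \<Longrightarrow> \<bar>(x - (a + b) / 2) / ((b - a) / 2)\<bar> \<le> 1"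
proof -
  assume h: "a \<le> x \<and> x \<le> b" "b - a \<noteq> 0"
  then have p: "(b - a) / 2 > 0" by simp
  have "\<bar>x - (a + b) / 2\<bar> \<le> (b - a) / 2" using h(1) mid_bound by blast
  then have "\<bar>x - (a + b) / 2\<bar> / ((b - a) / 2) \<le> 1" using p by (simp only: divide_le_eq_1_pos)
  then show ?thesis unfolding abs_divide[of "x - (a + b) / 2" "(b - a) / 2"] abs_of_pos[OF p] .
qed

lemma mid_recover: "(a::real) \<le> x \<and> x \<le> b \<Longrightarrow>
  (if b - a = 0 then 0 else (x - (a + b) / 2) / ((b - a) / 2)) * ((b - a) / 2) + (1/2) * (a + b) = x"
  by (cases "b - a = 0") (auto simp: field_simps)

lemma tangent_ineq:
  fixes g :: "'a::real_normed_vector \<Rightarrow> real^'n"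
  assumes cv: "convex_on P (\<lambda>z. g z $ i)" and dg: "(g has_derivative G) (at a)"
    and aP: "a \<in> P" and zP: "z \<in> P"
  shows "g a $ i + G (z - a) $ i \<le> g z $ i"
proof -
  define d where "d = z - a"
  define \<phi> where "\<phi> t = g (a + t *\<^sub>R d) $ i" for t :: real
  have lin: "linear G" using dg by (rule has_derivative_linear)
  have d1: "((\<lambda>t::real. a + t *\<^sub>R d) has_derivative (\<lambda>t. t *\<^sub>R d)) (at 0)"
    by (auto intro!: derivative_eq_intros)
  have dg0: "(g has_derivative G) (at (a + 0 *\<^sub>R d))" using dg by simp
  have d2: "((\<lambda>t. g (a + t *\<^sub>R d)) has_derivative (\<lambda>t. G (t *\<^sub>R d))) (at 0)"
    using has_derivative_compose[OF d1 dg0] by (simp add: o_def)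
  have d3: "((\<lambda>t. g (a + t *\<^sub>R d) $ i) has_derivative (\<lambda>t. G (t *\<^sub>R d) $ i)) (at 0)"
    using bounded_linear.has_derivative[OF bounded_linear_vec_nth d2] by simp
  have eqf: "(\<lambda>t. G (t *\<^sub>R d) $ i) = (*) (G d $ i)"
    by (auto simp: linear_cmul[OF lin] mult.commute)
  have "(\<phi> has_field_derivative (G d $ i)) (at 0)"
    unfolding has_field_derivative_def \<phi>_def using d3 eqf by simp
  then have "(\<phi> has_field_derivative (G d $ i)) (at 0 within {0<..})"
    by (rule has_field_derivative_at_within)
  then have lim: "((\<lambda>t. (\<phi> t - \<phi> 0) / (t - 0)) \<longlongrightarrow> G d $ i) (at_right 0)"
    by (simp add: has_field_derivative_iff)
  have ev: "\<forall>\<^sub>F t in at_right 0. (\<phi> t - \<phi> 0) / (t - 0) \<le> \<phi> 1 - \<phi> 0"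
  proof (rule eventually_mono[OF eventually_at_right_real[of 0 1]])
    fix t :: real assume "t \<in> {0<..<1}"
    then have t: "0 < t" "t < 1" by auto
    have "a + t *\<^sub>R d = (1 - t) *\<^sub>R a + t *\<^sub>R z" by (simp add: d_def algebra_simps)
    then have "\<phi> t \<le> (1 - t) * \<phi> 0 + t * \<phi> 1"
      using convex_onD[OF cv, of t a z] t aP zP by (simp add: \<phi>_def d_def)
    then show "(\<phi> t - \<phi> 0) / (t - 0) \<le> \<phi> 1 - \<phi> 0"
    proof -
      have "\<phi> t - \<phi> 0 \<le> (\<phi> 1 - \<phi> 0) * t" using \<open>\<phi> t \<le> _\<close> by (simp add: algebra_simps)
      then show ?thesis using t by (simp add: pos_divide_le_eq)
    qed
  qed simp
  have "G d $ i \<le> \<phi> 1 - \<phi> 0"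
    by (rule tendsto_le[OF _ tendsto_const lim ev]) simp
  then show ?thesis by (simp add: \<phi>_def d_def)
qed

lemma affine_cvx:
  fixes L :: "'a::real_vector \<Rightarrow> real^'n"
  assumes "linear L" "convex S"
  shows "convex_on S (\<lambda>z. L z $ i + c)"
proof (rule convex_onI)
  fix t x y
  show "L ((1 - t) *\<^sub>R x + t *\<^sub>R y) $ i + c \<le> (1 - t) * (L x $ i + c) + t * (L y $ i + c)"
  proof -
    have "L ((1 - t) *\<^sub>R x + t *\<^sub>R y) = (1 - t) *\<^sub>R L x + t *\<^sub>R L y"
      by (simp only: linear_add[OF assms(1)] linear_cmul[OF assms(1)])
    then have cc: "L ((1 - t) *\<^sub>R x + t *\<^sub>R y) $ i = (1 - t) * L x $ i + t * L y $ i"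
      by (simp only: vector_add_component vector_scaleR_component real_scaleR_def)
    show ?thesis unfolding cc by (simp add: algebra_simps)
  qed
qed (rule assms(2))

lemma sum_split_nat: fixes n2 :: nat shows "(\<Sum>j<n1+n2. \<phi> j) = (\<Sum>j<n1. \<phi> j) + (\<Sum>j<n2. \<phi> (j + n1))"
  by (induction n2) (auto simp: ac_simps)

lemma cz_singleton: "is_cz {c}"
proof -
  have "cz_set 0 0 (\<lambda>_. 0) c (\<lambda>_ _. 0) (\<lambda>_. 0) = {c}" by (auto simp: cz_set_def)
  then show ?thesis unfolding is_cz_def by metis
qed

lemma cz_linear:
  assumes L: "linear L" and S: "is_cz S"
  shows "is_cz (L ` S)"
proof -
  obtain ng nh G c A b where S: "S = cz_set ng nh G c A b" using S unfolding is_cz_def by blast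
  have "L ` S = cz_set ng nh (L \<circ> G) (L c) A b"
  proof (intro set_eqI iffI)
    fix y assume "y \<in> L ` S"
    then show "y \<in> cz_set ng nh (L \<circ> G) (L c) A b"
      unfolding S cz_set_def
      by (auto simp: linear_add[OF L] linear_sum[OF L] linear_cmul[OF L])
  next
    fix y assume "y \<in> cz_set ng nh (L \<circ> G) (L c) A b"
    then obtain \<xi> where y: "y = (\<Sum>j<ng. \<xi> j *\<^sub>R L (G j)) + L c"
      "\<forall>j<ng. \<bar>\<xi> j\<bar> \<le> 1" "\<forall>i<nh. (\<Sum>j<ng. A i j * \<xi> j) = b i"
      unfolding cz_set_def by auto
    have "y = L ((\<Sum>j<ng. \<xi> j *\<^sub>R G j) + c)"
      using y(1) by (simp add: linear_add[OF L] linear_sum[OF L] linear_cmul[OF L])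
    moreover have "(\<Sum>j<ng. \<xi> j *\<^sub>R G j) + c \<in> S"
      unfolding S cz_set_def using y by blast
    ultimately show "y \<in> L ` S" by blast
  qed
  then show ?thesis unfolding is_cz_def by blast
qed

lemma cz_zono: "is_cz (zonotope_set (G :: 'g::finite \<Rightarrow> 'a::real_vector) c)"
proof -
  obtain e where e: "bij_betw e {0..<CARD('g)} (UNIV :: 'g set)"
    using ex_bij_betw_nat_finite[of "UNIV :: 'g set"] by auto
  then have e': "bij_betw e {..<CARD('g)} (UNIV :: 'g set)" by (simp add: lessThan_atLeast0)
  have "zonotope_set G c = cz_set CARD('g) 0 (G \<circ> e) c (\<lambda>_ _. 0) (\<lambda>_. 0)"
  proof (intro set_eqI iffI)
    fix x assume "x \<in> zonotope_set G c"
    then obtain \<xi> where x: "x = (\<Sum>j\<in>UNIV. \<xi> j *\<^sub>R G j) + c" "\<forall>j. \<bar>\<xi> j\<bar> \<le> 1"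
      unfolding zonotope_set_def by blast
    have "(\<Sum>j<CARD('g). (\<xi> \<circ> e) j *\<^sub>R (G \<circ> e) j) = (\<Sum>j\<in>UNIV. \<xi> j *\<^sub>R G j)"
      using sum.reindex_bij_betw[OF e', of "\<lambda>j. \<xi> j *\<^sub>R G j"] by simp
    then show "x \<in> cz_set CARD('g) 0 (G \<circ> e) c (\<lambda>_ _. 0) (\<lambda>_. 0)"
      unfolding cz_set_def using x by (intro CollectI exI[of _ "\<xi> \<circ> e"]) auto
  next
    fix x assume "x \<in> cz_set CARD('g) 0 (G \<circ> e) c (\<lambda>_ _. 0) (\<lambda>_. 0)"
    then obtain \<xi> where x: "x = (\<Sum>j<CARD('g). \<xi> j *\<^sub>R G (e j)) + c" "\<forall>j<CARD('g). \<bar>\<xi> j\<bar> \<le> 1"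
      unfolding cz_set_def by auto
    define \<eta> where "\<eta> = \<xi> \<circ> inv_into {..<CARD('g)} e"
    have inv1: "inv_into {..<CARD('g)} e (e j) = j" if "j < CARD('g)" for j
      using e' that by (simp add: bij_betw_inv_into_left)
    have inv2: "inv_into {..<CARD('g)} e g < CARD('g)" for g
      using e' by (metis bij_betw_def inv_into_into lessThan_iff UNIV_I)
    have "(\<Sum>j\<in>UNIV. \<eta> j *\<^sub>R G j) = (\<Sum>j<CARD('g). \<eta> (e j) *\<^sub>R G (e j))"
      using sum.reindex_bij_betw[OF e', of "\<lambda>j. \<eta> j *\<^sub>R G j"] by simp
    also have "\<dots> = (\<Sum>j<CARD('g). \<xi> j *\<^sub>R G (e j))"
      by (rule sum.cong) (auto simp: \<eta>_def inv1)
    finally show "x \<in> zonotope_set G c"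
      unfolding zonotope_set_def using x inv2
      by (intro CollectI exI[of _ \<eta>]) (auto simp: \<eta>_def)
  qed
  then show ?thesis unfolding is_cz_def by blast
qed


lemma cz_msum:
  assumes "is_cz S" "is_cz T"
  shows "is_cz (S \<oplus>\<^sub>M T)"
proof -
  obtain n1 h1 G1 c1 A1 b1 where S: "S = cz_set n1 h1 G1 c1 A1 b1" using assms(1) unfolding is_cz_def by blast
  obtain n2 h2 G2 c2 A2 b2 where T: "T = cz_set n2 h2 G2 c2 A2 b2" using assms(2) unfolding is_cz_def by blast
  define G where "G j = (if j < n1 then G1 j else G2 (j - n1))" for j
  define A where "A i j = (if i < h1 then (if j < n1 then A1 i j else 0)
                  else (if j < n1 then 0 else A2 (i - h1) (j - n1)))" for i j
  define b where "b i = (if i < h1 then b1 i else b2 (i - h1))" for i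
  have "S \<oplus>\<^sub>M T = cz_set (n1 + n2) (h1 + h2) G (c1 + c2) A b"
  proof (intro set_eqI iffI)
    fix x assume "x \<in> S \<oplus>\<^sub>M T"
    then obtain \<xi>1 \<xi>2 where x: "x = ((\<Sum>j<n1. \<xi>1 j *\<^sub>R G1 j) + c1) + ((\<Sum>j<n2. \<xi>2 j *\<^sub>R G2 j) + c2)"
      and b1: "\<forall>j<n1. \<bar>\<xi>1 j\<bar> \<le> 1" and e1: "\<forall>i<h1. (\<Sum>j<n1. A1 i j * \<xi>1 j) = b1 i"
      and b2: "\<forall>j<n2. \<bar>\<xi>2 j\<bar> \<le> 1" and e2: "\<forall>i<h2. (\<Sum>j<n2. A2 i j * \<xi>2 j) = b2 i"
      unfolding msum_def S T cz_set_def by blast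
    define \<xi> where "\<xi> j = (if j < n1 then \<xi>1 j else \<xi>2 (j - n1))" for j
    have "(\<Sum>j<n1+n2. \<xi> j *\<^sub>R G j) = (\<Sum>j<n1. \<xi>1 j *\<^sub>R G1 j) + (\<Sum>j<n2. \<xi>2 j *\<^sub>R G2 j)"
      unfolding sum_split_nat by (simp add: \<xi>_def G_def)
    then have xe: "x = (\<Sum>j<n1+n2. \<xi> j *\<^sub>R G j) + (c1 + c2)" using x by (simp add: algebra_simps)
    have bd: "\<forall>j<n1+n2. \<bar>\<xi> j\<bar> \<le> 1" using b1 b2 by (auto simp: \<xi>_def)
    have eq: "\<forall>i<h1+h2. (\<Sum>j<n1+n2. A i j * \<xi> j) = b i"
    proof (intro allI impI)
      fix i assume i: "i < h1 + h2"
      show "(\<Sum>j<n1+n2. A i j * \<xi> j) = b i"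
      proof (cases "i < h1")
        case True
        then show ?thesis unfolding sum_split_nat using e1 by (simp add: A_def \<xi>_def b_def)
      next
        case False
        then have "i - h1 < h2" using i by simp
        then show ?thesis unfolding sum_split_nat using e2 False by (simp add: A_def \<xi>_def b_def)
      qed
    qed
    show "x \<in> cz_set (n1 + n2) (h1 + h2) G (c1 + c2) A b"
      unfolding cz_set_def using xe bd eq by blast
  next
    fix x assume "x \<in> cz_set (n1 + n2) (h1 + h2) G (c1 + c2) A b"
    then obtain \<xi> where x: "x = (\<Sum>j<n1+n2. \<xi> j *\<^sub>R G j) + (c1 + c2)"
      and bd: "\<forall>j<n1+n2. \<bar>\<xi> j\<bar> \<le> 1" and eq: "\<forall>i<h1+h2. (\<Sum>j<n1+n2. A i j * \<xi> j) = b i"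
      unfolding cz_set_def by blast
    define \<xi>2 where "\<xi>2 j = \<xi> (j + n1)" for j
    have s1: "(\<Sum>j<n1. \<xi> j *\<^sub>R G1 j) + c1 \<in> S"
    proof -
      have "\<forall>i<h1. (\<Sum>j<n1. A1 i j * \<xi> j) = b1 i"
      proof (intro allI impI)
        fix i assume i: "i < h1"
        then have "(\<Sum>j<n1+n2. A i j * \<xi> j) = b i" using eq by simp
        then show "(\<Sum>j<n1. A1 i j * \<xi> j) = b1 i" unfolding sum_split_nat using i
          by (simp add: A_def b_def)
      qed
      then show ?thesis unfolding S cz_set_def using bd by auto
    qed
    have s2: "(\<Sum>j<n2. \<xi>2 j *\<^sub>R G2 j) + c2 \<in> T"
    proof -
      have "\<forall>i<h2. (\<Sum>j<n2. A2 i j * \<xi>2 j) = b2 i"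
      proof (intro allI impI)
        fix i assume i: "i < h2"
        then have "(\<Sum>j<n1+n2. A (i + h1) j * \<xi> j) = b (i + h1)" using eq by simp
        then show "(\<Sum>j<n2. A2 i j * \<xi>2 j) = b2 i" unfolding sum_split_nat
          by (simp add: A_def b_def \<xi>2_def)
      qed
      moreover have "\<forall>j<n2. \<bar>\<xi>2 j\<bar> \<le> 1" using bd by (simp add: \<xi>2_def)
      ultimately show ?thesis unfolding T cz_set_def by auto
    qed
    have "(\<Sum>j<n1+n2. \<xi> j *\<^sub>R G j) = (\<Sum>j<n1. \<xi> j *\<^sub>R G1 j) + (\<Sum>j<n2. \<xi>2 j *\<^sub>R G2 j)"
      unfolding sum_split_nat by (simp add: G_def \<xi>2_def)
    then have "x = ((\<Sum>j<n1. \<xi> j *\<^sub>R G1 j) + c1) + ((\<Sum>j<n2. \<xi>2 j *\<^sub>R G2 j) + c2)"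
      using x by (simp add: algebra_simps)
    then show "x \<in> S \<oplus>\<^sub>M T" unfolding msum_def using s1 s2 by blast
  qed
  then show ?thesis unfolding is_cz_def by blast
qed

theorem theorem1:
  fixes X :: "(real^'n) set" and W :: "(real^'q) set" and u :: "real^'p"
    and f :: "(real^'n) \<times> (real^'p) \<times> (real^'q) \<Rightarrow> real^'n"
    and fa fb :: "(real^'n) \<times> (real^'p) \<times> (real^'q) \<Rightarrow> real^'n"
    and P :: "((real^'n) \<times> (real^'p) \<times> (real^'q)) set"
    and xb :: "real^'n" and wb :: "real^'q"
    and F Fa Fb :: "(real^'n) \<times> (real^'p) \<times> (real^'q) \<Rightarrow> real^'n"
    and em ep :: "real^'n"
  assumes X_cz: "is_cz X" and W_cz: "is_cz W"
    and P_poly: "polytope P"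
    and P_sup: "{(x, u, w) | x w. x \<in> X \<and> w \<in> W} \<subseteq> P"
    and f_dc: "\<forall>z\<in>P. f z = fa z - fb z"
    and fa_diff: "\<forall>z\<in>P. fa differentiable (at z)"
    and fb_diff: "\<forall>z\<in>P. fb differentiable (at z)"
    and fa_cvx: "\<forall>i. convex_on P (\<lambda>z. fa z $ i)"
    and fb_cvx: "\<forall>i. convex_on P (\<lambda>z. fb z $ i)"
    and zb_P: "(xb, u, wb) \<in> P"
    and F_der: "(f has_derivative F) (at (xb, u, wb))"
    and Fa_der: "(fa has_derivative Fa) (at (xb, u, wb))"
    and Fb_der: "(fb has_derivative Fb) (at (xb, u, wb))"
    and em_def: "em = (\<chi> i. Min ((\<lambda>z. (fa (xb, u, wb) + Fa (z - (xb, u, wb)) - fb z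
                   - (f (xb, u, wb) + F (z - (xb, u, wb)))) $ i) ` vertices P))"
    and ep_def: "ep = (\<chi> i. Max ((\<lambda>z. (fa z - (fb (xb, u, wb) + Fb (z - (xb, u, wb)))
                   - (f (xb, u, wb) + F (z - (xb, u, wb)))) $ i) ` vertices P))"
  shows "{f (x, u, w) | x w. x \<in> X \<and> w \<in> W}
           \<subseteq> {f (xb, u, wb) - F (xb, 0, 0) - F (0, 0, wb)}
               \<oplus>\<^sub>M (\<lambda>x. F (x, 0, 0)) ` X \<oplus>\<^sub>M (\<lambda>w. F (0, 0, w)) ` W
               \<oplus>\<^sub>M zonotope_set (\<lambda>j. ((ep $ j - em $ j) / 2) *\<^sub>R axis j 1) ((1/2) *\<^sub>R (em + ep))
       \<and> is_cz ({f (xb, u, wb) - F (xb, 0, 0) - F (0, 0, wb)}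
               \<oplus>\<^sub>M (\<lambda>x. F (x, 0, 0)) ` X \<oplus>\<^sub>M (\<lambda>w. F (0, 0, w)) ` W
               \<oplus>\<^sub>M zonotope_set (\<lambda>j. ((ep $ j - em $ j) / 2) *\<^sub>R axis j 1) ((1/2) *\<^sub>R (em + ep)))"
proof -
  define z0 where "z0 = (xb, u, wb)"
  define lin where "lin z = f z0 + F (z - z0)" for z
  have linF: "linear F" using F_der by (rule has_derivative_linear)
  have linFa: "linear Fa" using Fa_der by (rule has_derivative_linear)
  have linFb: "linear Fb" using Fb_der by (rule has_derivative_linear)
  have cvxP: "convex P" using P_poly by (rule polytope_imp_convex)
  have cmpP: "compact P" using P_poly by (rule polytope_imp_compact)
  have finV: "finite (vertices P)"
    unfolding vertices_def using P_poly by (intro finite_polyhedron_extreme_points polytope_imp_polyhedron)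
  have PV: "P = convex hull (vertices P)"
    unfolding vertices_def using Krein_Milman_Minkowski[OF cmpP cvxP] .
  have z0P: "z0 \<in> P" using zb_P by (simp add: z0_def)
  have lo: "em $ i \<le> (f z - lin z) $ i" and hi: "(f z - lin z) $ i \<le> ep $ i" if zP: "z \<in> P" for z i
  proof -
    define g where "g z' = (fa z0 + Fa (z' - z0) - fb z' - lin z') $ i" for z'
    define h where "h z' = (fa z' - (fb z0 + Fb (z' - z0)) - lin z') $ i" for z'
    have ng: "(\<lambda>z'. - g z') = (\<lambda>z'. fb z' $ i + ((\<lambda>z'. F z' - Fa z') z' $ i + (f z0 - F z0 - fa z0 + Fa z0) $ i))"
      by (auto simp: g_def lin_def linear_diff[OF linF] linear_diff[OF linFa] algebra_simps)
    have hh: "h = (\<lambda>z'. fa z' $ i + ((\<lambda>z'. - Fb z' - F z') z' $ i + (Fb z0 - fb z0 - f z0 + F z0) $ i))"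
      by (auto simp: h_def lin_def linear_diff[OF linF] linear_diff[OF linFb] algebra_simps)
    have l1: "linear (\<lambda>z'. F z' - Fa z')" using linF linFa by (intro linear_compose_sub)
    have l2: "linear (\<lambda>z'. - Fb z' - F z')" using linF linFb by (intro linear_compose_sub linear_compose_neg)
    have cg: "convex_on P (\<lambda>z'. - g z')"
      unfolding ng using fb_cvx by (intro convex_on_add[OF _ affine_cvx[OF l1 cvxP]]) auto
    have ch: "convex_on P h"
      unfolding hh using fa_cvx by (intro convex_on_add[OF _ affine_cvx[OF l2 cvxP]]) auto
    have emi: "em $ i = Min ((\<lambda>z'. (fa z0 + Fa (z' - z0) - fb z' - lin z') $ i) ` vertices P)"
      unfolding em_def lin_def z0_def by simp
    have "\<forall>v\<in>vertices P. em $ i \<le> g v"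
      using finV unfolding emi g_def by (auto intro: Min_le)
    then have "\<forall>v\<in>vertices P. - g v \<le> - em $ i" by auto
    then have "\<forall>v\<in>convex hull vertices P. - g v \<le> - em $ i"
      using cg PV by (intro convex_on_convex_hull_bound) auto
    then have e1: "em $ i \<le> g z" using zP PV by force
    have epi: "ep $ i = Max ((\<lambda>z'. (fa z' - (fb z0 + Fb (z' - z0)) - lin z') $ i) ` vertices P)"
      unfolding ep_def lin_def z0_def by simp
    have "\<forall>v\<in>vertices P. h v \<le> ep $ i"
      using finV unfolding epi h_def by (auto intro: Max_ge)
    then have "\<forall>v\<in>convex hull vertices P. h v \<le> ep $ i"
      using ch PV by (intro convex_on_convex_hull_bound) auto
    then have e2: "h z \<le> ep $ i" using zP PV by force
    have ta: "fa z0 $ i + Fa (z - z0) $ i \<le> fa z $ i"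
      using tangent_ineq[OF _ Fa_der[folded z0_def] z0P zP] fa_cvx by auto
    have tb: "fb z0 $ i + Fb (z - z0) $ i \<le> fb z $ i"
      using tangent_ineq[OF _ Fb_der[folded z0_def] z0P zP] fb_cvx by auto
    have fz: "f z = fa z - fb z" using f_dc zP by auto
    show "em $ i \<le> (f z - lin z) $ i" using e1 ta unfolding g_def fz by simp
    show "(f z - lin z) $ i \<le> ep $ i" using e2 tb unfolding h_def fz by simp
  qed
  define v where "v = f (xb, u, wb) - F (xb, 0, 0) - F (0, 0, wb)"
  define Z where "Z = zonotope_set (\<lambda>j. ((ep $ j - em $ j) / 2) *\<^sub>R axis j 1) ((1/2) *\<^sub>R (em + ep))"
  have inZ: "r \<in> Z" if r: "\<And>i. em $ i \<le> r $ i \<and> r $ i \<le> ep $ i" for r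
  proof -
    define \<xi> where "\<xi> j = (if ep $ j - em $ j = 0 then 0 else (r $ j - (em $ j + ep $ j) / 2) / ((ep $ j - em $ j) / 2))" for j
    have bd: "\<bar>\<xi> j\<bar> \<le> 1" for j
      using mid_bound2[OF r[of j]] by (simp add: \<xi>_def)
    have "(\<Sum>j\<in>UNIV. \<xi> j *\<^sub>R (((ep $ j - em $ j) / 2) *\<^sub>R axis j 1)) + (1/2) *\<^sub>R (em + ep) = r"
    proof (subst vec_eq_iff, intro allI)
      fix i
      have s: "(\<Sum>j\<in>UNIV. \<xi> j * ((ep $ j - em $ j) / 2 * axis j (1::real) $ i))
          = \<xi> i * ((ep $ i - em $ i) / 2)"
        by (simp add: axis_def if_distrib cong: if_cong)
      show "((\<Sum>j\<in>UNIV. \<xi> j *\<^sub>R (((ep $ j - em $ j) / 2) *\<^sub>R axis j 1)) + (1/2) *\<^sub>R (em + ep)) $ i = r $ i"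
      proof -
        have "((\<Sum>j\<in>UNIV. \<xi> j *\<^sub>R (((ep $ j - em $ j) / 2) *\<^sub>R axis j 1)) + (1/2) *\<^sub>R (em + ep)) $ i
            = (\<Sum>j\<in>UNIV. (\<xi> j *\<^sub>R (((ep $ j - em $ j) / 2) *\<^sub>R axis j (1::real))) $ i) + ((1/2) *\<^sub>R (em + ep)) $ i"
          by (simp only: vector_add_component sum_component)
        also have "\<dots> = \<xi> i * ((ep $ i - em $ i) / 2) + (1/2) * (em $ i + ep $ i)"
          by (simp only: s vector_scaleR_component vector_add_component real_scaleR_def)
        also have "\<dots> = r $ i" unfolding \<xi>_def by (rule mid_recover[OF r[of i]])
        finally show ?thesis .
      qed
    qed
    then show ?thesis unfolding Z_def zonotope_set_def using bd by blast
  qed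
  have part1: "{f (x, u, w) | x w. x \<in> X \<and> w \<in> W}
      \<subseteq> {v} \<oplus>\<^sub>M (\<lambda>x. F (x, 0, 0)) ` X \<oplus>\<^sub>M (\<lambda>w. F (0, 0, w)) ` W \<oplus>\<^sub>M Z"
  proof
    fix y assume "y \<in> {f (x, u, w) | x w. x \<in> X \<and> w \<in> W}"
    then obtain x w where y: "y = f (x, u, w)" and xw: "x \<in> X" "w \<in> W" by blast
    define z where "z = (x, u, w)"
    have zP: "z \<in> P" using P_sup xw by (auto simp: z_def)
    define r where "r = f z - lin z"
    have rZ: "r \<in> Z" using lo[OF zP] hi[OF zP] by (intro inZ) (simp add: r_def)
    have zz: "z - z0 = ((x, 0, 0) - (xb, 0, 0)) + ((0, 0, w) - (0, 0, wb))"
      by (simp add: z_def z0_def)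
    have "F (z - z0) = F (x, 0, 0) - F (xb, 0, 0) + (F (0, 0, w) - F (0, 0, wb))"
      by (simp only: zz linear_add[OF linF] linear_diff[OF linF])
    then have "y = v + F (x, 0, 0) + F (0, 0, w) + r"
      by (simp add: y r_def lin_def v_def z_def z0_def algebra_simps)
    then show "y \<in> {v} \<oplus>\<^sub>M (\<lambda>x. F (x, 0, 0)) ` X \<oplus>\<^sub>M (\<lambda>w. F (0, 0, w)) ` W \<oplus>\<^sub>M Z"
      unfolding msum_def using xw rZ by blast
  qed
  have lx: "linear (\<lambda>x. F (x, 0, 0))"
    using linF unfolding linear_iff by (simp add: linear_add[OF linF, symmetric] linear_cmul[OF linF, symmetric])
  have lw: "linear (\<lambda>w. F (0, 0, w))"
    using linF unfolding linear_iff by (simp add: linear_add[OF linF, symmetric] linear_cmul[OF linF, symmetric])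
  have part2: "is_cz ({v} \<oplus>\<^sub>M (\<lambda>x. F (x, 0, 0)) ` X \<oplus>\<^sub>M (\<lambda>w. F (0, 0, w)) ` W \<oplus>\<^sub>M Z)"
    unfolding Z_def
    by (intro cz_msum cz_singleton cz_zono cz_linear[OF lx X_cz] cz_linear[OF lw W_cz])
  show ?thesis using part1 part2 unfolding v_def Z_def by blast
qed

end
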